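(* Let $G$ be a graph, $Q\subseteq V(G)$ and $r:Q\to\{2,3\}$. If $G$ is a minimal $(Q,r)$-vertex-connected graph, then $G$ is biconnected.
   Context: Two vertices are $k$-vertex-connected if there are $k$ internally vertex-disjoint paths between them. $G$ is $(Q,r)$-vertex-connected if every pair $x,y\in Q$ is $\min\{r(x),r(y)\}$-vertex-connected in $G$; it is minimal if deleting any edge or vertex of $G$ violates this requirement. Biconnected means connected with no cut-vertex. *)

theory Defs
  imports Main
begin

definition graph :: "'a set \<Rightarrow> 'a set set \<Rightarrow> bool" where
  "graph V E \<longleftrightarrow> finite V \<and> (\<forall>e\<in>E. \<exists>u v. e = {u, v} \<and> u \<noteq> v \<and> u \<in> V \<and> v \<in> V)"

definition del_vertex_edges :: "'a \<Rightarrow> 'a set set \<Rightarrow> 'a set set" where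
  "del_vertex_edges v E = {e \<in> E. v \<notin> e}"

definition is_path :: "'a set \<Rightarrow> 'a set set \<Rightarrow> 'a list \<Rightarrow> 'a \<Rightarrow> 'a \<Rightarrow> bool" where
  "is_path V E p x y \<longleftrightarrow> p \<noteq> [] \<and> hd p = x \<and> last p = y \<and> distinct p \<and> set p \<subseteq> V \<and>
     (\<forall>i. Suc i < length p \<longrightarrow> {p ! i, p ! Suc i} \<in> E)"

definition interior :: "'a list \<Rightarrow> 'a set" where
  "interior p = set (butlast (tl p))"

definition k_vertex_connected :: "'a set \<Rightarrow> 'a set set \<Rightarrow> nat \<Rightarrow> 'a \<Rightarrow> 'a \<Rightarrow> bool" where
  "k_vertex_connected V E k x y \<longleftrightarrow>
     (\<exists>P. finite P \<and> card P = k \<and> (\<forall>p\<in>P. is_path V E p x y) \<and>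
          (\<forall>p\<in>P. \<forall>q\<in>P. p \<noteq> q \<longrightarrow> interior p \<inter> interior q = {}))"

definition QR_vertex_connected :: "'a set \<Rightarrow> 'a set set \<Rightarrow> 'a set \<Rightarrow> ('a \<Rightarrow> nat) \<Rightarrow> bool" where
  "QR_vertex_connected V E Q r \<longleftrightarrow> Q \<subseteq> V \<and>
     (\<forall>x\<in>Q. \<forall>y\<in>Q. x \<noteq> y \<longrightarrow> k_vertex_connected V E (min (r x) (r y)) x y)"

definition minimal_QR_vertex_connected :: "'a set \<Rightarrow> 'a set set \<Rightarrow> 'a set \<Rightarrow> ('a \<Rightarrow> nat) \<Rightarrow> bool" where
  "minimal_QR_vertex_connected V E Q r \<longleftrightarrow> QR_vertex_connected V E Q r \<and>
     (\<forall>e\<in>E. \<not> QR_vertex_connected V (E - {e}) Q r) \<and>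
     (\<forall>v\<in>V. \<not> QR_vertex_connected (V - {v}) (del_vertex_edges v E) Q r)"

definition connected_graph :: "'a set \<Rightarrow> 'a set set \<Rightarrow> bool" where
  "connected_graph V E \<longleftrightarrow> (\<forall>x\<in>V. \<forall>y\<in>V. \<exists>p. is_path V E p x y)"

definition biconnected :: "'a set \<Rightarrow> 'a set set \<Rightarrow> bool" where
  "biconnected V E \<longleftrightarrow> connected_graph V E \<and>
     (\<forall>v\<in>V. connected_graph (V - {v}) (del_vertex_edges v E))"

end

theory Submission
  imports Defs
begin

definition reach :: "'a set \<Rightarrow> 'a set set \<Rightarrow> 'a \<Rightarrow> 'a set" where
  "reach V E a = {z. \<exists>p. is_path V E p a z}"

lemma idx_up:
  fixes f :: "nat \<Rightarrow> bool"
  shows "\<not> f a \<Longrightarrow> f b \<Longrightarrow> a < b \<Longrightarrow> \<exists>j. a \<le> j \<and> j < b \<and> \<not> f j \<and> f (Suc j)"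
proof (induction b)
  case 0 then show ?case by simp
next
  case (Suc b)
  show ?case
  proof (cases "f b")
    case True
    then have "a < b" using Suc.prems by (metis less_SucE)
    then show ?thesis using Suc True by (meson less_SucI)
  next
    case False
    then show ?thesis using Suc.prems by (intro exI[of _ b]) auto
  qed
qed

lemma idx_down:
  fixes f :: "nat \<Rightarrow> bool"
  assumes "f a" "\<not> f b" "a < b"
  shows "\<exists>j. a \<le> j \<and> j < b \<and> f j \<and> \<not> f (Suc j)"
  using idx_up[of "\<lambda>i. \<not> f i" a b] assms by auto


lemma path_take':
  assumes "is_path V E p x y" "i < length p"
  shows "is_path V E (take (Suc i) p) x (p ! i)"
proof -
  have ne: "take (Suc i) p \<noteq> []" using assms(2) by auto
  have "hd (take (Suc i) p) = x" using assms unfolding is_path_def by (simp add: hd_take)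
  moreover have "last (take (Suc i) p) = p ! i"
    using assms(2) by (simp add: take_Suc_conv_app_nth)
  moreover have "distinct (take (Suc i) p)" using assms unfolding is_path_def by simp
  moreover have "set (take (Suc i) p) \<subseteq> V" using assms unfolding is_path_def
    by (meson order_trans set_take_subset)
  moreover have "\<forall>k. Suc k < length (take (Suc i) p) \<longrightarrow>
      {take (Suc i) p ! k, take (Suc i) p ! Suc k} \<in> E"
    using assms unfolding is_path_def by auto
  ultimately show ?thesis using ne unfolding is_path_def by blast
qed

lemma path_app:
  assumes "is_path V E p x y" "z \<notin> set p" "z \<in> V" "{y, z} \<in> E"
  shows "is_path V E (p @ [z]) x z"
proof -
  have ne: "p \<noteq> []" using assms unfolding is_path_def by simp
  have "\<forall>k. Suc k < length (p @ [z]) \<longrightarrow> {(p @ [z]) ! k, (p @ [z]) ! Suc k} \<in> E"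
  proof (intro allI impI)
    fix k assume k: "Suc k < length (p @ [z])"
    show "{(p @ [z]) ! k, (p @ [z]) ! Suc k} \<in> E"
    proof (cases "Suc k < length p")
      case True then show ?thesis using assms(1) unfolding is_path_def by (simp add: nth_append)
    next
      case False
      then have "k = length p - 1" using k by simp
      then have "(p @ [z]) ! k = y" "(p @ [z]) ! Suc k = z"
        using assms(1) ne unfolding is_path_def
        by (auto simp: nth_append last_conv_nth)
      then show ?thesis using assms(4) by simp
    qed
  qed
  then show ?thesis using assms ne unfolding is_path_def by auto
qed

lemma reach_closed:
  assumes "u \<in> reach V E a" "{u, z} \<in> E" "z \<in> V"
  shows "z \<in> reach V E a"
proof -
  obtain p where p: "is_path V E p a u" using assms(1) unfolding reach_def by blast
  show ?thesis
  proof (cases "z \<in> set p")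
    case True
    then obtain i where "i < length p" "p ! i = z" by (metis in_set_conv_nth)
    then have "is_path V E (take (Suc i) p) a z" using path_take'[OF p] by blast
    then show ?thesis unfolding reach_def by blast
  next
    case False
    then show ?thesis using path_app[OF p False assms(3,2)] unfolding reach_def by blast
  qed
qed

lemma path_restrict:
  assumes "is_path V E p x y" "v \<notin> set p"
  shows "is_path (V - {v}) (del_vertex_edges v E) p x y"
  using assms unfolding is_path_def del_vertex_edges_def
  by (auto simp: nth_mem)

lemma path_avoid:
  assumes p: "is_path V E p x y" and "x \<notin> D" "y \<notin> D" "w \<notin> D"
    and cl: "\<forall>u z. u \<in> D \<longrightarrow> {u, z} \<in> E \<longrightarrow> z \<noteq> w \<longrightarrow> z \<in> D"
  shows "set p \<inter> D = {}"
proof (rule ccontr)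
  assume "set p \<inter> D \<noteq> {}"
  then obtain i where i: "i < length p" "p ! i \<in> D" by (metis disjoint_iff in_set_conv_nth)
  have ne: "p \<noteq> []" and h: "p ! 0 = x" and l: "p ! (length p - 1) = y" and dp: "distinct p"
    using p unfolding is_path_def by (auto simp: hd_conv_nth last_conv_nth)
  have edge: "\<And>k. Suc k < length p \<Longrightarrow> {p ! k, p ! Suc k} \<in> E"
    using p unfolding is_path_def by blast
  have "0 < i" using h i assms(2) by (metis gr0I)
  from idx_up[of "\<lambda>k. p ! k \<in> D" 0 i] this h i assms(2)
  obtain j where j: "j < i" "p ! j \<notin> D" "p ! Suc j \<in> D" by auto
  have "{p ! Suc j, p ! j} \<in> E" using edge[of j] j i by (simp add: insert_commute)
  then have pj: "p ! j = w" using cl j by blast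
  have "i < length p - 1" using l i assms(3) by (metis diff_Suc_1 less_SucE Suc_pred' ne length_greater_0_conv)
  from idx_down[of "\<lambda>k. p ! k \<in> D" i "length p - 1"] this l i assms(3)
  obtain k where k: "i \<le> k" "k < length p - 1" "p ! k \<in> D" "p ! Suc k \<notin> D" by auto
  have "Suc k < length p" using k by simp
  then have "p ! Suc k = w" using cl k edge[of k] by blast
  moreover have "p ! j \<noteq> p ! Suc k" using dp j k by (simp add: nth_eq_iff_index_eq)
  ultimately show False using pj by simp
qed

lemma del_preserves:
  assumes qr: "QR_vertex_connected V E Q r" and "w \<notin> D"
    and cl: "\<forall>u z. u \<in> D \<longrightarrow> {u, z} \<in> E \<longrightarrow> z \<noteq> w \<longrightarrow> z \<in> D"
    and "Q \<inter> D = {}" "v \<in> D"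
  shows "QR_vertex_connected (V - {v}) (del_vertex_edges v E) Q r"
  unfolding QR_vertex_connected_def
proof (intro conjI ballI impI)
  show "Q \<subseteq> V - {v}" using qr assms(4,5) unfolding QR_vertex_connected_def by blast
next
  fix x y assume xy: "x \<in> Q" "y \<in> Q" "x \<noteq> y"
  then obtain P where P: "finite P" "card P = min (r x) (r y)" "\<forall>p\<in>P. is_path V E p x y"
      "\<forall>p\<in>P. \<forall>q\<in>P. p \<noteq> q \<longrightarrow> interior p \<inter> interior q = {}"
    using qr unfolding QR_vertex_connected_def k_vertex_connected_def by meson
  have "\<forall>p\<in>P. is_path (V - {v}) (del_vertex_edges v E) p x y"
  proof
    fix p assume "p \<in> P"
    then have pp: "is_path V E p x y" using P by blast
    have "x \<notin> D" "y \<notin> D" using xy assms(4) by auto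
    then have "set p \<inter> D = {}" using path_avoid[OF pp _ _ assms(2) cl] by blast
    then show "is_path (V - {v}) (del_vertex_edges v E) p x y"
      using path_restrict[OF pp] assms(5) by blast
  qed
  then show "k_vertex_connected (V - {v}) (del_vertex_edges v E) (min (r x) (r y)) x y"
    unfolding k_vertex_connected_def using P by blast
qed

lemma crossing:
  assumes p: "is_path V E p x y" and "x \<in> D" "y \<notin> D"
  shows "\<exists>j. Suc j < length p \<and> p ! j \<in> D \<and> p ! Suc j \<notin> D \<and> {p ! j, p ! Suc j} \<in> E"
proof -
  have ne: "p \<noteq> []" and h: "p ! 0 = x" and l: "p ! (length p - 1) = y"
    using p unfolding is_path_def by (auto simp: hd_conv_nth last_conv_nth)
  have "0 < length p - 1" using h l assms(2,3) by (metis gr0I)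
  from idx_down[of "\<lambda>k. p ! k \<in> D" 0 "length p - 1"] this h l assms(2,3)
  obtain j where "j < length p - 1" "p ! j \<in> D" "p ! Suc j \<notin> D" by auto
  then show ?thesis using p unfolding is_path_def by (intro exI[of _ j]) auto
qed

lemma in_interior:
  assumes "is_path V E p x y" "w \<in> set p" "w \<noteq> x" "w \<noteq> y"
  shows "w \<in> interior p"
proof -
  have ne: "p \<noteq> []" "hd p = x" "last p = y" using assms unfolding is_path_def by auto
  then have "w \<in> set (tl p)" using assms by (metis list.collapse set_ConsD)
  then have tne: "tl p \<noteq> []" by auto
  have "last (tl p) = y" using ne tne by (simp add: last_tl)
  then have "w \<in> set (butlast (tl p))" using \<open>w \<in> set (tl p)\<close> tne assms(4)
    by (metis append_butlast_last_id in_set_butlast_appendI rotate1.simps(2) set_ConsD set_rotate1)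
  then show ?thesis unfolding interior_def .
qed

lemma two_paths:
  assumes qr: "QR_vertex_connected V E Q r" and r: "\<forall>q\<in>Q. r q \<in> {2, 3}"
    and xy: "x \<in> Q" "y \<in> Q" "x \<noteq> y"
  shows "\<exists>p q. p \<noteq> q \<and> is_path V E p x y \<and> is_path V E q x y \<and> interior p \<inter> interior q = {}"
proof -
  obtain P where P: "finite P" "card P = min (r x) (r y)" "\<forall>p\<in>P. is_path V E p x y"
      "\<forall>p\<in>P. \<forall>q\<in>P. p \<noteq> q \<longrightarrow> interior p \<inter> interior q = {}"
    using qr xy unfolding QR_vertex_connected_def k_vertex_connected_def by meson
  have "card P \<ge> 2" using P(2) r xy by auto
  then obtain p q where "p \<in> P" "q \<in> P" "p \<noteq> q"
    using card_le_Suc0_iff_eq[OF P(1)] by auto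
  then show ?thesis using P by blast
qed

theorem lemma1:
  fixes V :: "'a set" and E :: "'a set set" and Q :: "'a set" and r :: "'a \<Rightarrow> nat"
  assumes "graph V E"
    and "Q \<subseteq> V"
    and "\<forall>q\<in>Q. r q \<in> {2, 3}"
    and "minimal_QR_vertex_connected V E Q r"
  shows "biconnected V E"
proof -
  have qr: "QR_vertex_connected V E Q r"
    and mn: "\<forall>v\<in>V. \<not> QR_vertex_connected (V - {v}) (del_vertex_edges v E) Q r"
    using assms(4) unfolding minimal_QR_vertex_connected_def by blast+
  have edgeV: "z \<in> V" if e: "{u, z} \<in> E" for u z
  proof -
    have "\<forall>e\<in>E. \<exists>a b. e = {a, b} \<and> a \<noteq> b \<and> a \<in> V \<and> b \<in> V"
      using assms(1) unfolding graph_def by (rule conjunct2)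
    then obtain a b where ab: "{u, z} = {a, b}" "a \<in> V" "b \<in> V"
      using e by meson
    have "z \<in> {u, z}" by simp
    then have "z \<in> {a, b}" using ab(1) by simp
    then show ?thesis using ab by blast
  qed
  have conn: "connected_graph V E"
    unfolding connected_graph_def
  proof (intro ballI, rule ccontr)
    fix a b assume ab: "a \<in> V" "b \<in> V" "\<nexists>p. is_path V E p a b"
    define D where "D = reach V E a"
    have aD: "a \<in> D" unfolding D_def reach_def mem_Collect_eq
      by (rule exI[of _ "[a]"]) (simp add: is_path_def ab)
    have bD: "b \<notin> D" using ab unfolding D_def reach_def by blast
    have clD: "\<forall>u z. u \<in> D \<longrightarrow> {u, z} \<in> E \<longrightarrow> z \<in> D"
      unfolding D_def using reach_closed[of _ V E a] edgeV by blast
    have DV: "D \<subseteq> V" unfolding D_def reach_def is_path_def by (auto simp: last_in_set)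
    define C where "C = V - D"
    have clC: "\<forall>u z. u \<in> C \<longrightarrow> {u, z} \<in> E \<longrightarrow> z \<in> C"
    proof (intro allI impI)
      fix u z assume uz: "u \<in> C" "{u, z} \<in> E"
      then have "{z, u} \<in> E" by (simp add: insert_commute)
      then have "z \<notin> D" using clD uz(1) unfolding C_def by blast
      then show "z \<in> C" using edgeV[OF uz(2)] unfolding C_def by blast
    qed
    show False
    proof (cases "\<exists>x\<in>Q \<inter> D. \<exists>y\<in>Q - D. True")
      case True
      then obtain x y where "x \<in> Q \<inter> D" "y \<in> Q - D" by blast
      moreover have "x \<noteq> y" using \<open>x \<in> Q \<inter> D\<close> \<open>y \<in> Q - D\<close> by blast
      ultimately obtain p where p: "is_path V E p x y" using two_paths[OF qr assms(3), of x y] by blast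
      from crossing[OF p] \<open>x \<in> Q \<inter> D\<close> \<open>y \<in> Q - D\<close> clD show False by blast
    next
      case False
      then have "Q \<inter> D = {} \<or> Q \<inter> C = {}" unfolding C_def by blast
      then show False
      proof
        assume "Q \<inter> D = {}"
        have "QR_vertex_connected (V - {a}) (del_vertex_edges a E) Q r"
          by (rule del_preserves[OF qr bD _ \<open>Q \<inter> D = {}\<close> aD]) (use clD in blast)
        then show False using mn ab(1) by blast
      next
        assume "Q \<inter> C = {}"
        moreover have "b \<in> C" "a \<notin> C" using ab aD bD unfolding C_def by auto
        ultimately have "QR_vertex_connected (V - {b}) (del_vertex_edges b E) Q r"
          by (intro del_preserves[OF qr \<open>a \<notin> C\<close>]) (use clC in blast)+
        then show False using mn ab(2) by blast
      qed
    qed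
  qed
  have "\<forall>w\<in>V. connected_graph (V - {w}) (del_vertex_edges w E)"
  proof (intro ballI)
    fix w assume wV: "w \<in> V"
    show "connected_graph (V - {w}) (del_vertex_edges w E)"
      unfolding connected_graph_def
    proof (intro ballI, rule ccontr)
      fix a b assume ab: "a \<in> V - {w}" "b \<in> V - {w}"
        "\<nexists>p. is_path (V - {w}) (del_vertex_edges w E) p a b"
      define D where "D = reach (V - {w}) (del_vertex_edges w E) a"
      have aD: "a \<in> D" unfolding D_def reach_def mem_Collect_eq
        by (rule exI[of _ "[a]"]) (use ab in \<open>simp add: is_path_def\<close>)
      have bD: "b \<notin> D" using ab unfolding D_def reach_def by blast
      have DV: "D \<subseteq> V - {w}"
      proof
        fix z assume "z \<in> D"
        then obtain p where p: "is_path (V - {w}) (del_vertex_edges w E) p a z"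
          unfolding D_def reach_def by blast
        then have "last p \<in> set p" "set p \<subseteq> V - {w}" "last p = z"
          unfolding is_path_def by auto
        then show "z \<in> V - {w}" by blast
      qed
      have wD: "w \<notin> D" using DV by blast
      have clD: "\<forall>u z. u \<in> D \<longrightarrow> {u, z} \<in> E \<longrightarrow> z \<noteq> w \<longrightarrow> z \<in> D"
      proof (intro allI impI)
        fix u z assume "u \<in> D" "{u, z} \<in> E" "z \<noteq> w"
        moreover have "u \<noteq> w" using \<open>u \<in> D\<close> wD by blast
        ultimately show "z \<in> D" unfolding D_def
          using reach_closed[of u "V - {w}" "del_vertex_edges w E" a z] edgeV
          by (auto simp: del_vertex_edges_def)
      qed
      define C where "C = V - {w} - D"
      have clC: "\<forall>u z. u \<in> C \<longrightarrow> {u, z} \<in> E \<longrightarrow> z \<noteq> w \<longrightarrow> z \<in> C"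
      proof (intro allI impI)
        fix u z assume uz: "u \<in> C" "{u, z} \<in> E" "z \<noteq> w"
        have "u \<noteq> w" using uz(1) unfolding C_def by blast
        have "{z, u} \<in> E" using uz(2) by (simp add: insert_commute)
        then have "z \<notin> D" using clD uz(1) \<open>u \<noteq> w\<close> unfolding C_def by blast
        then show "z \<in> C" using edgeV[OF uz(2)] uz(3) unfolding C_def by blast
      qed
      show False
      proof (cases "\<exists>x\<in>(Q - {w}) \<inter> D. \<exists>y\<in>Q - {w} - D. True")
        case True
        then obtain x y where x: "x \<in> Q" "x \<noteq> w" "x \<in> D" and y: "y \<in> Q" "y \<noteq> w" "y \<notin> D" by blast
        then have "x \<noteq> y" by blast
        obtain p q where pq: "p \<noteq> q" "is_path V E p x y" "is_path V E q x y"
          "interior p \<inter> interior q = {}"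
          using two_paths[OF qr assms(3) x(1) y(1) \<open>x \<noteq> y\<close>] by blast
        have "w \<in> interior p" if pp: "is_path V E p x y" for p
        proof -
          obtain j where "Suc j < length p" "p ! j \<in> D" "p ! Suc j \<notin> D" "{p ! j, p ! Suc j} \<in> E"
            using crossing[OF pp x(3) y(3)] by blast
          then have "p ! Suc j = w" using clD by blast
          then have "w \<in> set p" using \<open>Suc j < length p\<close> by (metis nth_mem)
          then show ?thesis using in_interior[OF pp] x y by metis
        qed
        then show False using pq by blast
      next
        case False
        then have "Q \<inter> D = {} \<or> Q \<inter> C = {}" unfolding C_def using wD by blast
        then show False
        proof
          assume "Q \<inter> D = {}"
          then have "QR_vertex_connected (V - {a}) (del_vertex_edges a E) Q r"
            by (rule del_preserves[OF qr wD clD _ aD])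
          then show False using mn ab(1) by blast
        next
          assume "Q \<inter> C = {}"
          moreover have "b \<in> C" "w \<notin> C" using ab bD unfolding C_def by auto
          ultimately have "QR_vertex_connected (V - {b}) (del_vertex_edges b E) Q r"
            by (intro del_preserves[OF qr \<open>w \<notin> C\<close> clC])
          then show False using mn ab(2) by blast
        qed
      qed
    qed
  qed
  then show ?thesis using conn unfolding biconnected_def by blast
qed

end
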